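(* Under the assumptions of Lemma 6.4 stated below, suppose in addition that $\sup_n\|I_n\mathbf K\|_{L^{\infty,1}(\Omega^2)}<+\infty$. Then $\sup_{t\in[0,T],n\in\mathbb N}\|\tilde u_n(\cdot,t)-\bar u_n(\cdot,t)\|_{L^2(\Omega)}\le C\tau$, where $C>0$ does not depend on $(n,N,T)$. Assumptions of Lemma 6.4: $p\in]1,2]$; for each $n$, $\mathbf u^k$ is given by the explicit scheme $\frac{\mathbf u^k-\mathbf u^{k-1}}{\tau_{k-1}}=-\Delta_p^{\mathbf K}\mathbf u^{k-1}+\mathbf f$, $\mathbf u^0=\mathbf g$, with step sizes $\tau_k\le2C_n\|\Delta_p^{I_n\mathbf K}u_n^k-f_n\|_{L^2}^{\frac{2-p}{p-1}}$, $u_n^k=I_n\mathbf u^k$, $f_n=I_n\mathbf f$, $C_n=2^{\frac{p-2}{2(p-1)}}(C_2^{1/2}\|I_n\mathbf K\|_{L^{\infty,1}(\Omega^2)})^{\frac1{1-p}}(1-1/p)$, $C_2=\max(2^{2-p},(p-1)2^{2-p},1)$; $I_n\mathbf g\in L^2(\Omega)$; $I_n\mathbf K$ nonnegative, measurable, symmetric with $\sup_x\int I_n\mathbf K(x,y)dy<\infty$; for each $n$ there is $\mathbf u^\star$ with $\Delta_p^{\mathbf K}\mathbf u^\star=\mathbf f$ and $\sup_n\|I_n\mathbf g-I_n\mathbf u^\star\|_{L^2}<\infty$.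
   Context: $d\ge1$, $\Omega=[0,1]^d$, hypercubic cells $\Omega^n_{\mathbf i}$ of measures $h_{\mathbf i}$, $I_n$ the piecewise-constant injector. $\Psi(s)=|s|^{p-2}s$; $(\Delta_p^{\mathbf K}\mathbf u)_{\mathbf i}=-\sum_{\mathbf j}h_{\mathbf j}\mathbf K_{\mathbf i\mathbf j}\Psi(\mathbf u_{\mathbf j}-\mathbf u_{\mathbf i})$ and $\Delta_p^Ku(x)=-\int_\Omega K(x,y)\Psi(u(y)-u(x))dy$. Time partition $0=t_0<\dots<t_N=T$, $\tau_{k-1}=t_k-t_{k-1}$, $\tau=\max_k\tau_{k-1}$. $\tilde u_n(x,t)=\frac{t_k-t}{\tau_{k-1}}u_n^{k-1}(x)+\frac{t-t_{k-1}}{\tau_{k-1}}u_n^k(x)$ and $\bar u_n(x,t)=u_n^{k-1}(x)$ for $t\in]t_{k-1},t_k]$. $\|F\|_{L^{\infty,1}(\Omega^2)}=\sup_x\int|F(x,y)|dy$. *)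

theory Defs
  imports "HOL-Analysis.Analysis"
begin

definition Omega :: "(real^'d::finite) set" where
  "Omega = {x. \<forall>l. 0 \<le> x$l \<and> x$l \<le> 1}"

definition is_cell_partition :: "'i set \<Rightarrow> ('i \<Rightarrow> (real^'d::finite) set) \<Rightarrow> bool" where
  "is_cell_partition J c \<longleftrightarrow> finite J \<and> J \<noteq> {} \<and> (\<Union>i\<in>J. c i) = Omega \<and>
     (\<forall>i\<in>J. \<forall>j\<in>J. i \<noteq> j \<longrightarrow> c i \<inter> c j = {}) \<and>
     (\<forall>i\<in>J. c i \<in> sets lebesgue \<and>
        (\<exists>a b r. r > 0 \<and> (\<forall>l. b$l = a$l + r) \<and> box a b \<subseteq> c i \<and> c i \<subseteq> cbox a b))"

definition cellmeas :: "('i \<Rightarrow> (real^'d::finite) set) \<Rightarrow> 'i \<Rightarrow> real" where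
  "cellmeas c i = measure lebesgue (c i)"

definition inj :: "'i set \<Rightarrow> ('i \<Rightarrow> (real^'d::finite) set) \<Rightarrow> ('i \<Rightarrow> real) \<Rightarrow> real^'d \<Rightarrow> real" where
  "inj J c v x = (\<Sum>i\<in>J. v i * indicator (c i) x)"

definition inj2 :: "'i set \<Rightarrow> ('i \<Rightarrow> (real^'d::finite) set) \<Rightarrow> ('i \<Rightarrow> 'i \<Rightarrow> real)
     \<Rightarrow> real^'d \<Rightarrow> real^'d \<Rightarrow> real" where
  "inj2 J c K x y = (\<Sum>i\<in>J. \<Sum>j\<in>J. K i j * indicator (c i) x * indicator (c j) y)"

definition L2norm :: "(real^'d::finite \<Rightarrow> real) \<Rightarrow> real" where
  "L2norm F = sqrt (\<integral>x. (F x)^2 \<partial>(lebesgue_on Omega))"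

definition Linf1norm :: "(real^'d::finite \<Rightarrow> real^'d \<Rightarrow> real) \<Rightarrow> real" where
  "Linf1norm F = (SUP x\<in>Omega. \<integral>y. \<bar>F x y\<bar> \<partial>(lebesgue_on Omega))"

definition Psi :: "real \<Rightarrow> real \<Rightarrow> real" where
  "Psi p s = \<bar>s\<bar> powr (p - 2) * s"

definition dplap :: "real \<Rightarrow> 'i set \<Rightarrow> ('i \<Rightarrow> (real^'d::finite) set) \<Rightarrow> ('i \<Rightarrow> 'i \<Rightarrow> real)
     \<Rightarrow> ('i \<Rightarrow> real) \<Rightarrow> 'i \<Rightarrow> real" where
  "dplap p J c K u i = - (\<Sum>j\<in>J. cellmeas c j * K i j * Psi p (u j - u i))"

definition cplap :: "real \<Rightarrow> (real^'d::finite \<Rightarrow> real^'d \<Rightarrow> real) \<Rightarrow> (real^'d \<Rightarrow> real)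
     \<Rightarrow> real^'d \<Rightarrow> real" where
  "cplap p K u x = - (\<integral>y. K x y * Psi p (u y - u x) \<partial>(lebesgue_on Omega))"

text \<open>Power of a nonnegative base with the convention x^0 = 1.\<close>
definition pw :: "real \<Rightarrow> real \<Rightarrow> real" where
  "pw x e = (if e = 0 then 1 else x powr e)"

definition C2 :: "real \<Rightarrow> real" where
  "C2 p = max (max (2 powr (2 - p)) ((p - 1) * 2 powr (2 - p))) 1"

definition Cn :: "real \<Rightarrow> real \<Rightarrow> real" where
  "Cn p nK = 2 powr ((p - 2) / (2 * (p - 1))) * (sqrt (C2 p) * nK) powr (1 / (1 - p)) * (1 - 1 / p)"

definition time_partition :: "(nat \<Rightarrow> real) \<Rightarrow> nat \<Rightarrow> bool" where
  "time_partition t N \<longleftrightarrow> N \<ge> 1 \<and> t 0 = 0 \<and> (\<forall>k\<in>{1..N}. t (k - 1) < t k)"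

definition tau :: "(nat \<Rightarrow> real) \<Rightarrow> nat \<Rightarrow> real" where
  "tau t N = Max {t k - t (k - 1) | k. k \<in> {1..N}}"

definition explicit_scheme :: "real \<Rightarrow> 'i set \<Rightarrow> ('i \<Rightarrow> (real^'d::finite) set) \<Rightarrow> ('i \<Rightarrow> 'i \<Rightarrow> real)
     \<Rightarrow> ('i \<Rightarrow> real) \<Rightarrow> ('i \<Rightarrow> real) \<Rightarrow> (nat \<Rightarrow> real) \<Rightarrow> nat \<Rightarrow> (nat \<Rightarrow> 'i \<Rightarrow> real) \<Rightarrow> bool" where
  "explicit_scheme p J c K f g t N u \<longleftrightarrow>
     (\<forall>i\<in>J. u 0 i = g i) \<and>
     (\<forall>k\<in>{1..N}. \<forall>i\<in>J. (u k i - u (k - 1) i) / (t k - t (k - 1)) = - dplap p J c K (u (k - 1)) i + f i)"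

text \<open>Step size restriction tau_{k-1} <= 2 C_n ||Delta_p^{I_n K} u_n^{k-1} - f_n||^((2-p)/(p-1)),
  imposed when ||I_n K|| > 0 (otherwise C_n = +infinity and there is no restriction).\<close>
definition step_ok :: "real \<Rightarrow> 'i set \<Rightarrow> ('i \<Rightarrow> (real^'d::finite) set) \<Rightarrow> ('i \<Rightarrow> 'i \<Rightarrow> real)
     \<Rightarrow> ('i \<Rightarrow> real) \<Rightarrow> (nat \<Rightarrow> real) \<Rightarrow> nat \<Rightarrow> (nat \<Rightarrow> 'i \<Rightarrow> real) \<Rightarrow> bool" where
  "step_ok p J c K f t N u \<longleftrightarrow>
     (\<forall>k\<in>{1..N}. Linf1norm (inj2 J c K) > 0 \<longrightarrow>
        t k - t (k - 1) \<le> 2 * Cn p (Linf1norm (inj2 J c K)) *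
          pw (L2norm (\<lambda>x. cplap p (inj2 J c K) (inj J c (u (k - 1))) x - inj J c f x)) ((2 - p) / (p - 1)))"

definition utilde :: "'i set \<Rightarrow> ('i \<Rightarrow> (real^'d::finite) set) \<Rightarrow> (nat \<Rightarrow> real) \<Rightarrow> (nat \<Rightarrow> 'i \<Rightarrow> real)
     \<Rightarrow> nat \<Rightarrow> real \<Rightarrow> real^'d \<Rightarrow> real" where
  "utilde J c t u k s x = (t k - s) / (t k - t (k - 1)) * inj J c (u (k - 1)) x
                        + (s - t (k - 1)) / (t k - t (k - 1)) * inj J c (u k) x"

definition ubar :: "'i set \<Rightarrow> ('i \<Rightarrow> (real^'d::finite) set) \<Rightarrow> (nat \<Rightarrow> 'i \<Rightarrow> real)
     \<Rightarrow> nat \<Rightarrow> real^'d \<Rightarrow> real" where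
  "ubar J c u k x = inj J c (u (k - 1)) x"

end

theory Submission
  imports Defs "HOL-Analysis.Analysis"
begin

lemma powr_convex0:
  fixes s :: real assumes "s \<ge> 1" shows "convex_on {0..} (\<lambda>x. x powr s)"
proof (rule convex_onI)
  fix x y :: real and t :: real
  assume x: "x \<in> {0..}" and y: "y \<in> {0..}" and t: "0 < t" "t < 1"
  have cv: "convex_on {0<..} (\<lambda>x. x powr s)" using powr_convex assms by blast
  show "((1 - t) *\<^sub>R x + t *\<^sub>R y) powr s \<le> (1 - t) * x powr s + t * y powr s"
  proof (cases "x = 0 \<or> y = 0")
    case False
    then have "x \<in> {0<..}" "y \<in> {0<..}" using x y by auto
    then show ?thesis using convex_onD[OF cv, of t x y] t by auto
  next
    case True
    have le: "z powr s \<le> z" if "0 \<le> z" "z \<le> 1" for z :: real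
    proof (cases "z = 0")
      case False then show ?thesis using powr_le_one_le[of z s] that assms by auto
    qed simp
    show ?thesis
    proof (cases "x = 0")
      case True
      have "(t * y) powr s = t powr s * y powr s" using t y by (simp add: powr_mult)
      also have "\<dots> \<le> t * y powr s" using le[of t] t by (intro mult_right_mono) auto
      finally show ?thesis using True assms by simp
    next
      case False
      then have y0: "y = 0" using True by auto
      have "((1-t) * x) powr s = (1-t) powr s * x powr s" using t x by (simp add: powr_mult)
      also have "\<dots> \<le> (1-t) * x powr s" using le[of "1-t"] t by (intro mult_right_mono) auto
      finally show ?thesis using y0 assms by simp
    qed
  qed
qed (simp add: convex_real_interval)

lemma jensen_powr:
  fixes w y :: "'a \<Rightarrow> real"
  assumes "finite S" "\<And>i. i \<in> S \<Longrightarrow> w i \<ge> 0" "\<And>i. i \<in> S \<Longrightarrow> y i \<ge> 0" "s \<ge> 1"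
  shows "(\<Sum>i\<in>S. w i * y i) powr s \<le> (\<Sum>i\<in>S. w i) powr (s - 1) * (\<Sum>i\<in>S. w i * y i powr s)"
proof -
  define W where "W = (\<Sum>i\<in>S. w i)"
  have W0: "W \<ge> 0" unfolding W_def using assms by (simp add: sum_nonneg)
  show ?thesis
  proof (cases "W = 0")
    case True
    then have "\<forall>i\<in>S. w i = 0" unfolding W_def using assms sum_nonneg_eq_0_iff by blast
    then show ?thesis by simp
  next
    case False
    then have Wp: "W > 0" using W0 by auto
    have Sne: "S \<noteq> {}" using False W_def by auto
    have "(\<Sum>i\<in>S. (w i / W) *\<^sub>R y i) powr s \<le> (\<Sum>i\<in>S. (w i / W) * y i powr s)"
      apply (rule convex_on_sum[OF assms(1) Sne powr_convex0[OF assms(4)]])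
      using assms Wp by (auto simp: W_def[symmetric] sum_divide_distrib[symmetric])
    also have "\<dots> = (\<Sum>i\<in>S. w i * y i powr s) / W" by (simp add: sum_divide_distrib)
    finally have 1: "((\<Sum>i\<in>S. w i * y i) / W) powr s \<le> (\<Sum>i\<in>S. w i * y i powr s) / W"
      by (simp add: sum_divide_distrib)
    have nn: "(\<Sum>i\<in>S. w i * y i) \<ge> 0" using assms by (simp add: sum_nonneg)
    have "((\<Sum>i\<in>S. w i * y i) / W) powr s = (\<Sum>i\<in>S. w i * y i) powr s / W powr s"
      using nn Wp by (simp add: powr_divide)
    with 1 have "(\<Sum>i\<in>S. w i * y i) powr s \<le> W powr s * ((\<Sum>i\<in>S. w i * y i powr s) / W)"
      using Wp by (simp add: divide_le_eq mult.commute)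
    also have "W powr s = W powr (s - 1) * W" using Wp by (simp add: powr_diff)
    finally show ?thesis using Wp by (simp add: W_def)
  qed
qed


lemma psi_pos: assumes "s \<ge> 0" shows "Psi p s = s powr (p - 1)"
proof (cases "s = 0")
  case False
  then have "s > 0" using assms by auto
  then have "s powr (p - 2) * s = s powr (p - 1)" using powr_add[of s "p - 2" 1] by simp
  then show ?thesis using assms by (simp add: Psi_def)
qed (simp add: Psi_def)

lemma psi_odd: "Psi p (- s) = - Psi p s"
  by (simp add: Psi_def)

lemma psi_nonneg: "s \<ge> 0 \<Longrightarrow> Psi p s \<ge> 0"
  by (simp add: psi_pos)

lemma psi_mono: assumes "p > 1" "a \<le> b" shows "Psi p a \<le> Psi p b"
proof -
  have m: "Psi p x \<le> Psi p y" if "0 \<le> x" "x \<le> y" for x y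
    using that assms by (simp add: psi_pos powr_mono2)
  consider "0 \<le> a" | "b \<le> 0" | "a < 0" "0 < b" by linarith
  then show ?thesis
  proof cases
    case 1 then show ?thesis using m assms by auto
  next
    case 2
    have "Psi p (-b) \<le> Psi p (-a)" using m[of "-b" "-a"] 2 assms by auto
    then show ?thesis by (simp add: psi_odd)
  next
    case 3
    have "Psi p (-a) \<ge> 0" using 3 by (intro psi_nonneg) auto
    then have "Psi p a \<le> 0" by (simp add: psi_odd)
    moreover have "Psi p b \<ge> 0" using 3 by (intro psi_nonneg) auto
    ultimately show ?thesis by linarith
  qed
qed

lemma powr_subadd:
  fixes x y r :: real
  assumes "x \<ge> 0" "y \<ge> 0" "0 < r" "r \<le> 1"
  shows "(x + y) powr r \<le> x powr r + y powr r"
proof (cases "x + y = 0")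
  case False
  then have S: "x + y > 0" using assms by auto
  have key: "z powr r \<ge> z" if "0 \<le> z" "z \<le> 1" for z :: real
  proof (cases "z = 0")
    case False
    then have "z powr 1 \<le> z powr r" using that assms by (intro powr_mono') auto
    then show ?thesis using that by simp
  qed simp
  have "x powr r = (x + y) powr r * (x / (x + y)) powr r"
    using S assms by (simp add: powr_divide)
  also have "\<dots> \<ge> (x + y) powr r * (x / (x + y))"
    using S assms key[of "x/(x+y)"] by (intro mult_left_mono) auto
  finally have 1: "x powr r \<ge> (x + y) powr r * (x / (x + y))" .
  have "y powr r = (x + y) powr r * (y / (x + y)) powr r"
    using S assms by (simp add: powr_divide)
  also have "\<dots> \<ge> (x + y) powr r * (y / (x + y))"
    using S assms key[of "y/(x+y)"] by (intro mult_left_mono) auto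
  finally have 2: "y powr r \<ge> (x + y) powr r * (y / (x + y))" .
  have xy1: "x / (x + y) + y / (x + y) = 1" using S by (simp add: add_divide_distrib[symmetric])
  have "(x + y) powr r * (x / (x + y)) + (x + y) powr r * (y / (x + y)) = (x + y) powr r"
    by (metis xy1 distrib_left mult_1_right)
  then show ?thesis using 1 2 by linarith
qed (use assms in auto)

lemma powr_concave2:
  fixes x y r :: real
  assumes "x \<ge> 0" "y \<ge> 0" "0 < r" "r \<le> 1"
  shows "x powr r + y powr r \<le> 2 powr (1 - r) * (x + y) powr r"
proof -
  define X where "X = x powr r"
  define Y where "Y = y powr r"
  have X0: "X \<ge> 0" "Y \<ge> 0" by (auto simp: X_def Y_def)
  have s1: "1 / r \<ge> 1" using assms by simp
  have c: "((1 - 1/2) *\<^sub>R X + (1/2) *\<^sub>R Y) powr (1/r) \<le> (1 - 1/2) * X powr (1/r) + (1/2) * Y powr (1/r)"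
    using convex_onD[OF powr_convex0[OF s1], of "1/2" X Y] X0 by auto
  have "X powr (1/r) = x" using assms by (simp add: X_def powr_powr)
  moreover have "Y powr (1/r) = y" using assms by (simp add: Y_def powr_powr)
  ultimately have c2: "((X + Y)/2) powr (1/r) \<le> (x + y) / 2" using c by (simp add: field_simps)
  have "(X + Y)/2 = (((X + Y)/2) powr (1/r)) powr r" using assms X0 by (simp add: powr_powr)
  also have "\<dots> \<le> ((x + y) / 2) powr r" using c2 assms by (intro powr_mono2) auto
  also have "\<dots> = (x + y) powr r / 2 powr r" using assms by (simp add: powr_divide)
  finally have "X + Y \<le> 2 * ((x + y) powr r / 2 powr r)" by (simp add: ac_simps)
  also have "2 * ((x + y) powr r / 2 powr r) = 2 powr (1 - r) * (x + y) powr r"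
    by (simp add: powr_diff)
  finally show ?thesis by (simp add: X_def Y_def)
qed

lemma psi_holder_aux:
  assumes p: "1 < p" "p \<le> 2" and ba: "b \<le> a"
  shows "\<bar>Psi p a - Psi p b\<bar> \<le> 2 powr (2 - p) * \<bar>a - b\<bar> powr (p - 1)"
proof -
  have two: "2 powr (2 - p) \<ge> 1" using p by (intro ge_one_powr_ge_zero) auto
  have same: "Psi p y - Psi p x \<le> 2 powr (2 - p) * (y - x) powr (p - 1)" if "0 \<le> x" "x \<le> y" for x y
  proof -
    have "Psi p y - Psi p x = (x + (y - x)) powr (p - 1) - x powr (p - 1)"
      using that by (simp add: psi_pos)
    also have "\<dots> \<le> (y - x) powr (p - 1)"
      using powr_subadd[of x "y - x" "p - 1"] that p by simp
    also have "\<dots> \<le> 2 powr (2 - p) * (y - x) powr (p - 1)"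
      using two by (simp add: mult_le_cancel_right1)
    finally show ?thesis .
  qed
  have d0: "Psi p a - Psi p b \<ge> 0" using psi_mono[OF p(1) ba] by simp
  consider "0 \<le> b" | "a \<le> 0" | "b < 0" "0 < a" by linarith
  then show ?thesis
  proof cases
    case 1 then show ?thesis using same[of b a] ba d0 by simp
  next
    case 2
    have "Psi p (-b) - Psi p (-a) \<le> 2 powr (2 - p) * (-b - -a) powr (p - 1)"
      using same[of "-a" "-b"] 2 ba by simp
    then show ?thesis using d0 ba by (simp add: psi_odd)
  next
    case 3
    have "Psi p a - Psi p b = a powr (p - 1) + (-b) powr (p - 1)"
      using 3 psi_pos[of a p] psi_pos[of "-b" p] psi_odd[of p b] by simp
    also have "\<dots> \<le> 2 powr (1 - (p - 1)) * (a + (-b)) powr (p - 1)"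
      using powr_concave2[of a "-b" "p - 1"] 3 p by simp
    finally show ?thesis using d0 ba by simp
  qed
qed

lemma psi_holder:
  assumes p: "1 < p" "p \<le> 2"
  shows "\<bar>Psi p a - Psi p b\<bar> \<le> 2 powr (2 - p) * \<bar>a - b\<bar> powr (p - 1)"
proof (cases "b \<le> a")
  case True then show ?thesis using psi_holder_aux[OF p] by blast
next
  case False
  then show ?thesis using psi_holder_aux[OF p, of a b] by (simp add: abs_minus_commute)
qed


definition lap :: "real \<Rightarrow> 'i set \<Rightarrow> ('i \<Rightarrow> real) \<Rightarrow> ('i \<Rightarrow> 'i \<Rightarrow> real) \<Rightarrow> ('i \<Rightarrow> real) \<Rightarrow> 'i \<Rightarrow> real" where
  "lap p J h K u i = - (\<Sum>j\<in>J. h j * K i j * Psi p (u j - u i))"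

lemma dplap_lap: "dplap p J c K u i = lap p J (cellmeas c) K u i"
  by (simp add: dplap_def lap_def)

lemma lap_diff: "lap p J h K u i - lap p J h K v i =
   - (\<Sum>j\<in>J. h j * K i j * (Psi p (u j - u i) - Psi p (v j - v i)))"
  unfolding lap_def by (simp add: sum_subtractf right_diff_distrib)

lemma psi_sq_bound:
  assumes "1 < p" "p \<le> 2"
  shows "(Psi p a - Psi p b)^2 \<le> 4 * (1 + ((a - b))^2)"
proof -
  define z where "z = \<bar>a - b\<bar> powr (p - 1)"
  have z0: "z \<ge> 0" by (simp add: z_def)
  have "2 powr (2 - p) \<le> 2 powr 1" using assms by (intro powr_mono) auto
  then have "2 powr (2 - p) * z \<le> 2 * z" using mult_right_mono[OF _ z0] by simp
  then have "\<bar>Psi p a - Psi p b\<bar> \<le> 2 * z"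
    using psi_holder[OF assms, of a b] unfolding z_def[symmetric] by linarith
  then have "(Psi p a - Psi p b)^2 \<le> (2 * z)^2"
    by (metis abs_ge_zero power2_abs power_mono)
  also have "(2*z)^2 = 4 * z^2" by (simp add: power_mult_distrib)
  also have "z^2 = \<bar>a - b\<bar> powr (2 * (p - 1))"
    unfolding z_def using powr_powr[of "\<bar>a - b\<bar>" "p - 1" 2]
    by (simp add: mult.commute)
  also have "\<bar>a - b\<bar> powr (2 * (p - 1)) \<le> 1 + (a - b)^2"
  proof (cases "\<bar>a - b\<bar> \<le> 1")
    case True
    then have "\<bar>a - b\<bar> powr (2 * (p - 1)) \<le> 1" using assms by (intro powr_le1) auto
    then show ?thesis by (smt (verit) zero_le_power2)
  next
    case False
    then have "\<bar>a - b\<bar> powr (2 * (p - 1)) \<le> \<bar>a - b\<bar> powr 2" using assms by (intro powr_mono) auto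
    also have "\<dots> = (a - b)^2" by simp
    finally show ?thesis by simp
  qed
  finally show ?thesis by simp
qed

context
  fixes p :: real and J :: "'i set" and h :: "'i \<Rightarrow> real" and K :: "'i \<Rightarrow> 'i \<Rightarrow> real" and L :: real
  assumes fin: "finite J" and hnn: "\<And>j. j \<in> J \<Longrightarrow> 0 \<le> h j" and hsum: "sum h J = 1"
    and Knn: "\<And>i j. i \<in> J \<Longrightarrow> j \<in> J \<Longrightarrow> 0 \<le> K i j"
    and Ksym: "\<And>i j. i \<in> J \<Longrightarrow> j \<in> J \<Longrightarrow> K i j = K j i"
    and rows: "\<And>i. i \<in> J \<Longrightarrow> (\<Sum>j\<in>J. h j * K i j) \<le> L"
    and p1: "1 < p" and p2: "p \<le> 2"
begin

lemma w_nn: "i \<in> J \<Longrightarrow> j \<in> J \<Longrightarrow> 0 \<le> h j * K i j"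
  using hnn Knn by simp

lemma sym_sum: "(\<Sum>i\<in>J. h i * (\<Sum>j\<in>J. h j * K i j * F j)) = (\<Sum>j\<in>J. h j * F j * (\<Sum>i\<in>J. h i * K j i))"
proof -
  have "(\<Sum>i\<in>J. h i * (\<Sum>j\<in>J. h j * K i j * F j)) = (\<Sum>i\<in>J. \<Sum>j\<in>J. h i * h j * K i j * F j)"
    by (simp add: sum_distrib_left mult.assoc)
  also have "\<dots> = (\<Sum>j\<in>J. \<Sum>i\<in>J. h i * h j * K i j * F j)" by (rule sum.swap)
  also have "\<dots> = (\<Sum>j\<in>J. h j * F j * (\<Sum>i\<in>J. h i * K j i))"
    by (auto simp: sum_distrib_left Ksym intro!: sum.cong)
  finally show ?thesis .
qed

lemma core_bound:
  assumes L0: "0 \<le> L"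
  shows "(\<Sum>i\<in>J. h i * (lap p J h K u i - lap p J h K us i)^2)
      \<le> 4 * L^2 * (1 + 4 * (\<Sum>i\<in>J. h i * (u i - us i)^2))"
proof -
  define e where "e i = u i - us i" for i
  define E where "E = (\<Sum>i\<in>J. h i * (e i)^2)"
  define R where "R i = (\<Sum>j\<in>J. h j * K i j)" for i
  have E0: "E \<ge> 0" unfolding E_def using hnn by (auto intro: sum_nonneg)
  have R0: "i \<in> J \<Longrightarrow> R i \<ge> 0" for i unfolding R_def using w_nn by (auto intro: sum_nonneg)
  have per: "(lap p J h K u i - lap p J h K us i)^2 \<le> 4 * L * (R i + 2 * (e i)^2 * R i + 2 * (\<Sum>j\<in>J. h j * K i j * (e j)^2))"
    if i: "i \<in> J" for i
  proof -
    define D where "D j = Psi p (u j - u i) - Psi p (us j - us i)" for j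
    have "\<bar>lap p J h K u i - lap p J h K us i\<bar> = \<bar>\<Sum>j\<in>J. h j * K i j * D j\<bar>"
      by (simp add: lap_diff D_def)
    also have "\<dots> \<le> (\<Sum>j\<in>J. \<bar>h j * K i j * D j\<bar>)" by (rule sum_abs)
    also have "\<dots> = (\<Sum>j\<in>J. h j * K i j * \<bar>D j\<bar>)"
    proof (rule sum.cong)
      fix j assume j: "j \<in> J"
      have "\<bar>(h j * K i j) * D j\<bar> = \<bar>h j * K i j\<bar> * \<bar>D j\<bar>" by (rule abs_mult)
      then show "\<bar>h j * K i j * D j\<bar> = h j * K i j * \<bar>D j\<bar>" using w_nn[OF i j] by simp
    qed simp
    finally have a1: "\<bar>lap p J h K u i - lap p J h K us i\<bar> \<le> (\<Sum>j\<in>J. h j * K i j * \<bar>D j\<bar>)" .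
    have "(\<Sum>j\<in>J. h j * K i j * \<bar>D j\<bar>) powr 2 \<le> (\<Sum>j\<in>J. h j * K i j) powr (2 - 1) * (\<Sum>j\<in>J. h j * K i j * \<bar>D j\<bar> powr 2)"
      by (rule jensen_powr[OF fin]) (use w_nn[OF i] in auto)
    then have a2: "(\<Sum>j\<in>J. h j * K i j * \<bar>D j\<bar>)^2 \<le> R i * (\<Sum>j\<in>J. h j * K i j * (D j)^2)"
      using w_nn[OF i] R0[OF i] by (simp add: R_def sum_nonneg)
    have a3: "(\<Sum>j\<in>J. h j * K i j * (D j)^2) \<le> (\<Sum>j\<in>J. h j * K i j * (4 * (1 + 2 * (e i)^2 + 2 * (e j)^2)))"
    proof (rule sum_mono)
      fix j assume j: "j \<in> J"
      have "(D j)^2 \<le> 4 * (1 + ((u j - u i) - (us j - us i))^2)"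
        unfolding D_def by (rule psi_sq_bound[OF p1 p2])
      also have "((u j - u i) - (us j - us i))^2 = (e j - e i)^2" by (simp add: e_def algebra_simps)
      also have "(e j - e i)^2 \<le> 2 * (e i)^2 + 2 * (e j)^2"
      proof -
        have "2 * (e i)^2 + 2 * (e j)^2 - (e j - e i)^2 = (e i + e j)^2"
          by (simp add: power2_eq_square algebra_simps)
        then show ?thesis using zero_le_power2[of "e i + e j"] by linarith
      qed
      finally have "(D j)^2 \<le> 4 * (1 + 2 * (e i)^2 + 2 * (e j)^2)" by simp
      then show "h j * K i j * (D j)^2 \<le> h j * K i j * (4 * (1 + 2 * (e i)^2 + 2 * (e j)^2))"
        using w_nn[OF i j] by (intro mult_left_mono) auto
    qed
    also have "\<dots> = (\<Sum>j\<in>J. 4 * (h j * K i j) + (8 * (e i)^2) * (h j * K i j) + 8 * (h j * K i j * (e j)^2))"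
      by (rule sum.cong) (simp_all add: algebra_simps)
    also have "\<dots> = 4 * R i + 8 * (e i)^2 * R i + 8 * (\<Sum>j\<in>J. h j * K i j * (e j)^2)"
      by (simp add: sum.distrib sum_distrib_left[symmetric] R_def)
    also have "\<dots> = 4 * (R i + 2 * (e i)^2 * R i + 2 * (\<Sum>j\<in>J. h j * K i j * (e j)^2))"
      by simp
    finally have a3': "(\<Sum>j\<in>J. h j * K i j * (D j)^2) \<le> 4 * (R i + 2 * (e i)^2 * R i + 2 * (\<Sum>j\<in>J. h j * K i j * (e j)^2))" .
    have s0: "0 \<le> (\<Sum>j\<in>J. h j * K i j * (D j)^2)" using w_nn[OF i] by (auto intro: sum_nonneg)
    have "(lap p J h K u i - lap p J h K us i)^2 \<le> (\<Sum>j\<in>J. h j * K i j * \<bar>D j\<bar>)^2"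
      using a1 by (metis abs_ge_zero power2_abs power_mono)
    also have "\<dots> \<le> R i * (\<Sum>j\<in>J. h j * K i j * (D j)^2)" by (rule a2)
    also have "\<dots> \<le> L * (\<Sum>j\<in>J. h j * K i j * (D j)^2)"
      using rows[OF i] s0 by (intro mult_right_mono) (auto simp: R_def)
    also have "\<dots> \<le> L * (4 * (R i + 2 * (e i)^2 * R i + 2 * (\<Sum>j\<in>J. h j * K i j * (e j)^2)))"
      using a3' L0 by (intro mult_left_mono) auto
    finally show ?thesis by (simp add: algebra_simps)
  qed
  have "(\<Sum>i\<in>J. h i * (lap p J h K u i - lap p J h K us i)^2)
     \<le> (\<Sum>i\<in>J. h i * (4 * L * (R i + 2 * (e i)^2 * R i + 2 * (\<Sum>j\<in>J. h j * K i j * (e j)^2))))"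
    using per hnn by (auto intro!: sum_mono mult_left_mono)
  also have "\<dots> = (\<Sum>i\<in>J. (4 * L) * (h i * R i) + (8 * L) * (h i * (e i)^2 * R i)
        + (8 * L) * (h i * (\<Sum>j\<in>J. h j * K i j * (e j)^2)))"
    by (rule sum.cong) (simp_all add: algebra_simps)
  also have "\<dots> = 4 * L * ((\<Sum>i\<in>J. h i * R i) + 2 * (\<Sum>i\<in>J. h i * (e i)^2 * R i)
        + 2 * (\<Sum>i\<in>J. h i * (\<Sum>j\<in>J. h j * K i j * (e j)^2)))"
    by (simp add: sum.distrib sum_distrib_left algebra_simps)
  also have "(\<Sum>i\<in>J. h i * (\<Sum>j\<in>J. h j * K i j * (e j)^2)) = (\<Sum>j\<in>J. h j * (e j)^2 * R j)"
    unfolding R_def by (rule sym_sum)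
  finally have main: "(\<Sum>i\<in>J. h i * (lap p J h K u i - lap p J h K us i)^2)
     \<le> 4 * L * ((\<Sum>i\<in>J. h i * R i) + 4 * (\<Sum>i\<in>J. h i * (e i)^2 * R i))" by (simp add: add.commute)
  have b1: "(\<Sum>i\<in>J. h i * R i) \<le> L"
  proof -
    have "(\<Sum>i\<in>J. h i * R i) \<le> (\<Sum>i\<in>J. h i * L)"
      using hnn rows by (auto intro!: sum_mono mult_left_mono simp: R_def)
    also have "\<dots> = L" using hsum by (simp add: sum_distrib_right[symmetric])
    finally show ?thesis .
  qed
  have b2: "(\<Sum>i\<in>J. h i * (e i)^2 * R i) \<le> L * E"
  proof -
    have "(\<Sum>i\<in>J. h i * (e i)^2 * R i) \<le> (\<Sum>i\<in>J. h i * (e i)^2 * L)"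
      using hnn rows by (auto intro!: sum_mono mult_left_mono simp: R_def)
    also have "\<dots> = L * E" unfolding E_def sum_distrib_left by (rule sum.cong) (simp_all add: algebra_simps)
    finally show ?thesis .
  qed
  have "4 * L * ((\<Sum>i\<in>J. h i * R i) + 4 * (\<Sum>i\<in>J. h i * (e i)^2 * R i)) \<le> 4 * L * (L + 4 * (L * E))"
    using b1 b2 L0 by (intro mult_left_mono) auto
  also have "\<dots> = 4 * L^2 * (1 + 4 * E)" by (simp add: algebra_simps power2_eq_square)
  finally show ?thesis using main by (simp add: E_def e_def)
qed

end

lemma psi_prod_nn: assumes "1 < p" shows "0 \<le> (Psi p a - Psi p b) * (a - b)"
proof (cases "b \<le> a")
  case True then show ?thesis using psi_mono[OF assms True] by simp
next
  case False then have "a \<le> b" by simp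
  then show ?thesis using psi_mono[OF assms \<open>a \<le> b\<close>] by (simp add: mult_nonpos_nonpos)
qed

lemma psi_key:
  assumes p: "1 < p" "p \<le> 2"
  shows "\<bar>Psi p a - Psi p b\<bar> powr (1 + 1/(p-1)) \<le> 2 powr (1/(p-1) - 1) * ((Psi p a - Psi p b) * (a - b))"
proof -
  define d where "d = \<bar>Psi p a - Psi p b\<bar>"
  define x where "x = \<bar>a - b\<bar>"
  have d0: "d \<ge> 0" and x0: "x \<ge> 0" by (auto simp: d_def x_def)
  have h: "d \<le> 2 powr (2 - p) * x powr (p - 1)" unfolding d_def x_def by (rule psi_holder[OF p])
  have "d powr (1/(p-1)) \<le> (2 powr (2 - p) * x powr (p - 1)) powr (1/(p-1))"
    using h d0 p by (intro powr_mono2) auto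
  also have "\<dots> = 2 powr ((2 - p) * (1/(p-1))) * x powr ((p - 1) * (1/(p-1)))"
    by (simp add: powr_mult powr_powr)
  also have "(2 - p) * (1/(p-1)) = 1/(p-1) - 1" using p by (simp add: field_simps)
  also have "(p - 1) * (1/(p-1)) = 1" using p by simp
  finally have h2: "d powr (1/(p-1)) \<le> 2 powr (1/(p-1) - 1) * x" using x0 by simp
  have eq: "d powr (1 + 1/(p-1)) = d * d powr (1/(p-1))"
  proof (cases "d = 0")
    case False then show ?thesis using d0 by (simp add: powr_add)
  qed simp
  have "d powr (1 + 1/(p-1)) \<le> d * (2 powr (1/(p-1) - 1) * x)"
    unfolding eq using h2 d0 by (intro mult_left_mono) auto
  also have "\<dots> = 2 powr (1/(p-1) - 1) * (d * x)" by simp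
  also have "d * x = (Psi p a - Psi p b) * (a - b)"
    using psi_prod_nn[OF p(1), of a b] unfolding d_def x_def by (simp add: abs_mult[symmetric])
  finally show ?thesis unfolding d_def .
qed

lemma C2_eq: assumes "1 < p" "p \<le> 2" shows "C2 p = 2 powr (2 - p)"
proof -
  have X: "2 powr (2 - p) \<ge> 1" using assms by (intro ge_one_powr_ge_zero) auto
  have "(p - 1) * 2 powr (2 - p) \<le> 2 powr (2 - p)" using assms by (simp add: mult_le_cancel_right1)
  then show ?thesis using X by (simp add: C2_def)
qed

lemma Cn_prod:
  assumes p: "1 < p" "p \<le> 2" and L: "L > 0"
  shows "Cn p L * L powr (1/(p-1)) * 2 powr (1/(p-1)) = 2 * (1 - 1/p)"
proof -
  have s: "sqrt (C2 p) = 2 powr ((2 - p)/2)" using C2_eq[OF p] by (simp add: powr_half_sqrt_powr)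
  have "Cn p L = 2 powr ((p - 2) / (2 * (p - 1))) * (2 powr ((2 - p)/2 * (1/(1-p))) * L powr (1/(1-p))) * (1 - 1/p)"
    unfolding Cn_def s using L by (simp add: powr_mult powr_powr)
  then have "Cn p L * L powr (1/(p-1)) * 2 powr (1/(p-1)) =
     2 powr ((p - 2) / (2 * (p - 1)) + (2 - p)/2 * (1/(1-p)) + 1/(p-1)) * L powr (1/(1-p) + 1/(p-1)) * (1 - 1/p)"
    by (simp add: powr_add)
  also have "(p - 2) / (2 * (p - 1)) + (2 - p)/2 * (1/(1-p)) + 1/(p-1) = 1"
  proof -
    have n: "p - 1 \<noteq> 0" using p by auto
    have e1: "(2 - p)/2 * (1/(1-p)) = (p - 2) / (2 * (p - 1))"
    proof -
      have "1 - p = -(p - 1)" by simp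
      then have "(2 - p)/2 * (1/(1-p)) = (2 - p) / (- (2 * (p - 1)))" by simp
      also have "\<dots> = (p - 2) / (2 * (p - 1))" using minus_divide_divide[of "p - 2" "2 * (p - 1)"] by (simp add: algebra_simps)
      finally show ?thesis .
    qed
    have h2: "(p - 2) / (2 * (p - 1)) + (p - 2) / (2 * (p - 1)) = (p - 2) / (p - 1)"
    proof -
      have "(p - 2) / (2 * (p - 1)) = ((p - 2) / (p - 1)) / 2" by simp
      then show ?thesis by (metis field_sum_of_halves)
    qed
    have "(p - 2) / (2 * (p - 1)) + (p - 2) / (2 * (p - 1)) + 1/(p-1) = ((p - 2) + 1) / (p - 1)"
      unfolding h2 by (rule add_divide_distrib[symmetric])
    also have "\<dots> = 1" using n by simp
    finally show ?thesis using e1 by simp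
  qed
  also have "1/(1-p) + 1/(p-1) = 0"
  proof -
    have "1 / (1 - p) = - (1 / (p - 1))" by (metis minus_diff_eq divide_minus_right)
    then show ?thesis by simp
  qed
  finally show ?thesis using L by simp
qed


context
  fixes p :: real and J :: "'i set" and h :: "'i \<Rightarrow> real" and K :: "'i \<Rightarrow> 'i \<Rightarrow> real" and L :: real
  assumes fin: "finite J" and hnn: "\<And>j. j \<in> J \<Longrightarrow> 0 \<le> h j" and hsum: "sum h J = 1"
    and Knn: "\<And>i j. i \<in> J \<Longrightarrow> j \<in> J \<Longrightarrow> 0 \<le> K i j"
    and Ksym: "\<And>i j. i \<in> J \<Longrightarrow> j \<in> J \<Longrightarrow> K i j = K j i"
    and rows: "\<And>i. i \<in> J \<Longrightarrow> (\<Sum>j\<in>J. h j * K i j) \<le> L"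
    and p1: "1 < p" and p2: "p \<le> 2"
begin

lemma w_nn': "i \<in> J \<Longrightarrow> j \<in> J \<Longrightarrow> 0 \<le> h j * K i j"
  using hnn Knn by simp

lemma core_mono:
  assumes tau0: "0 \<le> \<tau>"
    and step: "L > 0 \<Longrightarrow> (\<Sum>i\<in>J. h i * (lap p J h K u i - lap p J h K us i)^2) > 0 \<Longrightarrow>
         \<tau> \<le> 2 * Cn p L * sqrt (\<Sum>i\<in>J. h i * (lap p J h K u i - lap p J h K us i)^2) powr ((2-p)/(p-1))"
  shows "(\<Sum>i\<in>J. h i * (u i - \<tau> * (lap p J h K u i - lap p J h K us i) - us i)^2) \<le> (\<Sum>i\<in>J. h i * (u i - us i)^2)"
proof -
  define A where "A i = lap p J h K u i - lap p J h K us i" for i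
  define e where "e i = u i - us i" for i
  define D where "D i j = Psi p (u j - u i) - Psi p (us j - us i)" for i j
  define N2 where "N2 = (\<Sum>i\<in>J. h i * (A i)^2)"
  define G where "G = (\<Sum>i\<in>J. h i * A i * e i)"
  define S where "S = (\<Sum>i\<in>J. \<Sum>j\<in>J. h i * h j * K i j * (D i j * (e j - e i)))"
  have A_eq: "A i = -(\<Sum>j\<in>J. h j * K i j * D i j)" for i by (simp add: A_def D_def lap_diff)
  have Dsym: "D j i = - D i j" for i j
    unfolding D_def using psi_odd[of p "u j - u i"] psi_odd[of p "us j - us i"] by simp
  have Dprod: "0 \<le> D i j * (e j - e i)" for i j
  proof -
    have "e j - e i = (u j - u i) - (us j - us i)" by (simp add: e_def)
    then show ?thesis unfolding D_def using psi_prod_nn[OF p1, of "u j - u i" "us j - us i"] by simp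
  qed
  have N0: "N2 \<ge> 0" unfolding N2_def using hnn by (auto intro: sum_nonneg)
  have S0: "0 \<le> S" unfolding S_def
  proof (intro sum_nonneg)
    fix i j assume "i \<in> J" "j \<in> J"
    then show "0 \<le> h i * h j * K i j * (D i j * (e j - e i))"
      by (intro mult_nonneg_nonneg[OF _ Dprod]) (simp add: hnn Knn)
  qed
  define T2 where "T2 = (\<Sum>i\<in>J. \<Sum>j\<in>J. h i * h j * K i j * D i j * e i)"
  have T1: "(\<Sum>i\<in>J. \<Sum>j\<in>J. h i * h j * K i j * D i j * e j) = - T2"
  proof -
    have "(\<Sum>i\<in>J. \<Sum>j\<in>J. h i * h j * K i j * D i j * e j) = (\<Sum>j\<in>J. \<Sum>i\<in>J. h i * h j * K i j * D i j * e j)"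
      by (rule sum.swap)
    also have "\<dots> = (\<Sum>i\<in>J. \<Sum>j\<in>J. - (h i * h j * K i j * D i j * e i))"
    proof (intro sum.cong refl)
      fix i j assume "i \<in> J" "j \<in> J"
      then have "K j i = K i j" using Ksym by blast
      then show "h j * h i * K j i * D j i * e i = - (h i * h j * K i j * D i j * e i)"
        unfolding Dsym[of i j] by simp
    qed
    also have "\<dots> = - T2" by (simp add: T2_def sum_negf)
    finally show ?thesis .
  qed
  have SG: "S = 2 * G"
  proof -
    have "S = (\<Sum>i\<in>J. \<Sum>j\<in>J. h i * h j * K i j * D i j * e j) - T2"
      unfolding S_def T2_def by (simp add: sum_subtractf[symmetric] algebra_simps)
    also have "G = - T2"
      unfolding G_def T2_def A_eq by (simp add: sum_distrib_left sum_distrib_right sum_negf algebra_simps)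
    ultimately show ?thesis using T1 by simp
  qed
  have expand: "(\<Sum>i\<in>J. h i * (u i - \<tau> * A i - us i)^2) = (\<Sum>i\<in>J. h i * (e i)^2) - 2 * \<tau> * G + \<tau>^2 * N2"
  proof -
    have "(\<Sum>i\<in>J. h i * (u i - \<tau> * A i - us i)^2) = (\<Sum>i\<in>J. h i * (e i)^2 - (2 * \<tau>) * (h i * A i * e i) + \<tau>^2 * (h i * (A i)^2))"
      by (intro sum.cong refl) (simp add: e_def power2_eq_square algebra_simps)
    also have "\<dots> = (\<Sum>i\<in>J. h i * (e i)^2) - 2 * \<tau> * G + \<tau>^2 * N2"
      by (simp add: sum.distrib sum_subtractf sum_distrib_left[symmetric] G_def N2_def)
    finally show ?thesis .
  qed
  have key: "\<tau> * N2 \<le> S"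
  proof (cases "N2 = 0")
    case True then show ?thesis using S0 by simp
  next
    case False
    then have Np: "N2 > 0" using N0 by simp
    show ?thesis
    proof (cases "L > 0")
      case False
      have "A i = 0" if i: "i \<in> J" for i
      proof -
        have "(\<Sum>j\<in>J. h j * K i j) \<le> 0" using rows[OF i] False by simp
        then have "\<forall>j\<in>J. h j * K i j = 0"
          using sum_nonneg_eq_0_iff[OF fin] w_nn'[OF i] sum_nonneg[of J "\<lambda>j. h j * K i j"]
          by (metis (no_types, lifting) order_antisym)
        then have "\<forall>j\<in>J. h j * K i j * D i j = 0" by simp
        then have "(\<Sum>j\<in>J. h j * K i j * D i j) = 0" by (rule sum.neutral)
        then show ?thesis unfolding A_eq by simp
      qed
      then have "N2 = 0" unfolding N2_def by simp
      then show ?thesis using Np by simp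
    next
      case Lp: True
      define x where "x = 1 / (p - 1)"
      have n: "p - 1 \<noteq> 0" using p1 by simp
      have x1: "x \<ge> 1" unfolding x_def using p1 p2 by (simp add: field_simps)
      define q where "q = 1 + x"
      have q2: "q / 2 \<ge> 1" using x1 by (simp add: q_def)
      have j1: "N2 powr (q/2) \<le> (\<Sum>i\<in>J. h i * \<bar>A i\<bar> powr q)"
      proof -
        have "N2 powr (q/2) \<le> (sum h J) powr (q/2 - 1) * (\<Sum>i\<in>J. h i * ((A i)^2) powr (q/2))"
          unfolding N2_def by (rule jensen_powr[OF fin]) (use hnn q2 in auto)
        also have "(\<Sum>i\<in>J. h i * ((A i)^2) powr (q/2)) = (\<Sum>i\<in>J. h i * \<bar>A i\<bar> powr q)"
        proof (intro sum.cong refl)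
          fix i
          have eq: "(A i)^2 = \<bar>A i\<bar> powr 2" by simp
          have "((A i)^2) powr (q/2) = \<bar>A i\<bar> powr (2 * (q/2))" unfolding eq powr_powr by (rule refl)
          then show "h i * ((A i)^2) powr (q/2) = h i * \<bar>A i\<bar> powr q" by simp
        qed
        finally show ?thesis using hsum by simp
      qed
      have j2: "\<bar>A i\<bar> powr q \<le> L powr x * (2 powr (x - 1) * (\<Sum>j\<in>J. h j * K i j * (D i j * (e j - e i))))"
        if i: "i \<in> J" for i
      proof -
        have "\<bar>A i\<bar> = \<bar>\<Sum>j\<in>J. h j * K i j * D i j\<bar>" by (simp add: A_eq)
        also have "\<dots> \<le> (\<Sum>j\<in>J. \<bar>h j * K i j * D i j\<bar>)" by (rule sum_abs)
        also have "\<dots> = (\<Sum>j\<in>J. h j * K i j * \<bar>D i j\<bar>)"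
        proof (rule sum.cong)
          fix j assume j: "j \<in> J"
          have "\<bar>(h j * K i j) * D i j\<bar> = \<bar>h j * K i j\<bar> * \<bar>D i j\<bar>" by (rule abs_mult)
          then show "\<bar>h j * K i j * D i j\<bar> = h j * K i j * \<bar>D i j\<bar>" using w_nn'[OF i j] by simp
        qed simp
        finally have a1: "\<bar>A i\<bar> \<le> (\<Sum>j\<in>J. h j * K i j * \<bar>D i j\<bar>)" .
        have "\<bar>A i\<bar> powr q \<le> (\<Sum>j\<in>J. h j * K i j * \<bar>D i j\<bar>) powr q"
          using a1 q2 by (intro powr_mono2) auto
        also have "\<dots> \<le> (\<Sum>j\<in>J. h j * K i j) powr (q - 1) * (\<Sum>j\<in>J. h j * K i j * \<bar>D i j\<bar> powr q)"
          by (rule jensen_powr[OF fin]) (use w_nn'[OF i] q2 in auto)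
        also have "\<dots> \<le> L powr x * (\<Sum>j\<in>J. h j * K i j * \<bar>D i j\<bar> powr q)"
        proof (rule mult_right_mono)
          show "(\<Sum>j\<in>J. h j * K i j) powr (q - 1) \<le> L powr x"
          proof -
            have "q - 1 = x" by (simp add: q_def)
            moreover have "(\<Sum>j\<in>J. h j * K i j) powr x \<le> L powr x"
              using rows[OF i] x1 w_nn'[OF i] by (intro powr_mono2) (auto intro: sum_nonneg)
            ultimately show ?thesis by simp
          qed
          show "0 \<le> (\<Sum>j\<in>J. h j * K i j * \<bar>D i j\<bar> powr q)"
            using w_nn'[OF i] by (auto intro: sum_nonneg)
        qed
        also have "(\<Sum>j\<in>J. h j * K i j * \<bar>D i j\<bar> powr q) \<le> (\<Sum>j\<in>J. h j * K i j * (2 powr (x - 1) * (D i j * (e j - e i))))"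
        proof (rule sum_mono)
          fix j assume j: "j \<in> J"
          have "\<bar>D i j\<bar> powr q \<le> 2 powr (x - 1) * (D i j * (e j - e i))"
          proof -
            have ee: "e j - e i = (u j - u i) - (us j - us i)" by (simp add: e_def)
            show ?thesis unfolding D_def ee q_def x_def by (rule psi_key[OF p1 p2])
          qed
          then show "h j * K i j * \<bar>D i j\<bar> powr q \<le> h j * K i j * (2 powr (x - 1) * (D i j * (e j - e i)))"
            using w_nn'[OF i j] by (intro mult_left_mono) auto
        qed
        then have "L powr x * (\<Sum>j\<in>J. h j * K i j * \<bar>D i j\<bar> powr q) \<le> L powr x * (\<Sum>j\<in>J. h j * K i j * (2 powr (x - 1) * (D i j * (e j - e i))))"
          by (intro mult_left_mono) auto
        also have "(\<Sum>j\<in>J. h j * K i j * (2 powr (x - 1) * (D i j * (e j - e i)))) = 2 powr (x - 1) * (\<Sum>j\<in>J. h j * K i j * (D i j * (e j - e i)))"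
          by (simp add: sum_distrib_left algebra_simps)
        finally show ?thesis .
      qed
      have "N2 powr (q/2) \<le> (\<Sum>i\<in>J. h i * (L powr x * (2 powr (x - 1) * (\<Sum>j\<in>J. h j * K i j * (D i j * (e j - e i))))))"
        using j1 j2 hnn by (auto intro!: order.trans[OF j1] sum_mono mult_left_mono)
      also have "\<dots> = L powr x * 2 powr (x - 1) * S"
        unfolding S_def by (simp add: sum_distrib_left algebra_simps)
      finally have j3: "N2 powr (q/2) \<le> L powr x * 2 powr (x - 1) * S" .
      have ex: "1/2 * ((2 - p)/(p - 1)) + 1 = q / 2"
      proof -
        have "(2 - p)/(p - 1) = x - 1" unfolding x_def using n by (simp add: field_simps)
        then show ?thesis unfolding q_def by (simp only:) (simp add: field_simps)
      qed
      have sq: "sqrt N2 powr ((2-p)/(p-1)) * N2 = N2 powr (q/2)"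
      proof -
        have "sqrt N2 powr ((2-p)/(p-1)) * N2 = N2 powr (1/2 * ((2-p)/(p-1))) * N2 powr 1"
          using Np by (simp add: powr_half_sqrt[symmetric] powr_powr)
        also have "\<dots> = N2 powr (q/2)" unfolding ex[symmetric] powr_add[symmetric] by simp
        finally show ?thesis .
      qed
      have Cn0: "Cn p L \<ge> 0"
      proof -
        have "0 \<le> 1 - 1/p" using p1 by simp
        then show ?thesis unfolding Cn_def by (intro mult_nonneg_nonneg) auto
      qed
      have "\<tau> * N2 \<le> 2 * Cn p L * sqrt N2 powr ((2-p)/(p-1)) * N2"
        using step[OF Lp] Np unfolding A_def N2_def by (intro mult_right_mono) auto
      also have "\<dots> = 2 * Cn p L * N2 powr (q/2)" using sq by (simp add: mult.assoc)
      also have "\<dots> \<le> 2 * Cn p L * (L powr x * 2 powr (x - 1) * S)"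
        using j3 Cn0 by (intro mult_left_mono) auto
      also have "\<dots> = (Cn p L * L powr x * 2 powr x) * S"
        by (simp add: powr_diff)
      also have "Cn p L * L powr x * 2 powr x = 2 * (1 - 1/p)"
        unfolding x_def by (rule Cn_prod[OF p1 p2 Lp])
      also have "2 * (1 - 1/p) * S \<le> S"
      proof -
        have "2 * (1 - 1/p) \<le> 1" using p1 p2 by (simp add: field_simps)
        then show ?thesis using S0 mult_right_mono[of "2 * (1 - 1/p)" 1 S] by simp
      qed
      finally show ?thesis .
    qed
  qed
  have "\<tau>^2 * N2 \<le> 2 * \<tau> * G"
  proof -
    have "\<tau> * (\<tau> * N2) \<le> \<tau> * S" using key tau0 by (intro mult_left_mono) auto
    then show ?thesis using SG by (simp add: power2_eq_square algebra_simps)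
  qed
  then show ?thesis using expand unfolding A_def e_def by simp
qed

end

lemma Omega_cbox: "Omega = cbox (0::real^'d::finite) 1"
  by (auto simp: Omega_def mem_box_cart)

lemma Omega_sets: "Omega \<in> sets lebesgue"
  unfolding Omega_cbox by simp

lemma Omega_meas: "measure lebesgue (Omega :: (real^'d::finite) set) = 1"
proof -
  have "(0::real^'d) \<in> cbox 0 1" by (simp add: mem_box_cart)
  then have "cbox (0::real^'d) 1 \<noteq> {}" by blast
  then show ?thesis unfolding Omega_cbox by (simp add: content_cbox_cart)
qed

lemma space_lo: "space (lebesgue_on (Omega :: (real^'d::finite) set)) = Omega"
  by simp

context
  fixes J :: "'i set" and c :: "'i \<Rightarrow> (real^'d::finite) set"
  assumes P: "is_cell_partition J c"
begin

lemma finJ: "finite J" using P by (simp add: is_cell_partition_def)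
lemma Jne: "J \<noteq> {}" using P by (simp add: is_cell_partition_def)
lemma cell_sub: "i \<in> J \<Longrightarrow> c i \<subseteq> Omega" using P unfolding is_cell_partition_def by blast
lemma cell_sets: "i \<in> J \<Longrightarrow> c i \<in> sets lebesgue" using P unfolding is_cell_partition_def by auto
lemma cell_disj: "i \<in> J \<Longrightarrow> j \<in> J \<Longrightarrow> i \<noteq> j \<Longrightarrow> x \<in> c i \<Longrightarrow> x \<notin> c j"
  using P unfolding is_cell_partition_def by auto
lemma cover: "x \<in> Omega \<Longrightarrow> \<exists>i\<in>J. x \<in> c i"
proof -
  assume "x \<in> Omega"
  moreover have "(\<Union>i\<in>J. c i) = Omega" using P unfolding is_cell_partition_def by auto
  ultimately show ?thesis by auto
qed
lemma cell_ne: "i \<in> J \<Longrightarrow> \<exists>x. x \<in> c i"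
proof -
  assume i: "i \<in> J"
  have "\<forall>i\<in>J. c i \<in> sets lebesgue \<and>
        (\<exists>a b r. r > 0 \<and> (\<forall>l. b$l = a$l + r) \<and> box a b \<subseteq> c i \<and> c i \<subseteq> cbox a b)"
    using P unfolding is_cell_partition_def by simp
  then have "\<exists>a b r. r > 0 \<and> (\<forall>l. b$l = a$l + r) \<and> box a b \<subseteq> c i \<and> c i \<subseteq> cbox a b"
    using i by blast
  then obtain a b r where r: "r > 0" "\<forall>l. b$l = a$l + r" "box a b \<subseteq> c i"
    by blast
  have "(\<chi> l. a$l + r/2) \<in> box a b" using r by (auto simp: mem_box_cart)
  then show ?thesis using r by blast
qed

lemma inj_cell: "i \<in> J \<Longrightarrow> x \<in> c i \<Longrightarrow> inj J c v x = v i"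
proof -
  assume i: "i \<in> J" and x: "x \<in> c i"
  have "inj J c v x = (\<Sum>k\<in>J. if k = i then v i else 0)"
    unfolding inj_def using cell_disj[OF i _ _ x] x by (intro sum.cong refl) (auto simp: indicator_def)
  also have "\<dots> = v i" using i finJ by simp
  finally show ?thesis .
qed

lemma cellmeas_nn: "0 \<le> cellmeas c i" by (simp add: cellmeas_def)

lemma integral_inj: "integral\<^sup>L (lebesgue_on Omega) (inj J c w) = (\<Sum>i\<in>J. w i * cellmeas c i)"
proof -
  have m: "measure (lebesgue_on Omega) (c i) = cellmeas c i" if "i \<in> J" for i
    unfolding cellmeas_def using Omega_sets cell_sub[OF that] by (intro measure_restrict_space) auto
  have fin: "emeasure lebesgue (c i) < \<infinity>" if "i \<in> J" for i
  proof -
    have "c i \<in> lmeasurable"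
      using cell_sub[OF that] cell_sets[OF that] unfolding Omega_cbox
      by (intro bounded_set_imp_lmeasurable) (auto intro: bounded_subset[OF bounded_cbox])
    then show ?thesis using fmeasurableD2 less_top infinity_ennreal_def by metis
  qed
  have int: "integrable (lebesgue_on Omega) (\<lambda>x. w i * indicator (c i) x)" if "i \<in> J" for i
  proof -
    have O: "Omega \<inter> space lebesgue \<in> sets lebesgue" using Omega_sets by simp
    have s1: "c i \<in> sets (lebesgue_on Omega)"
      using sets_restrict_space_iff[OF O] cell_sub[OF that] cell_sets[OF that] by blast
    have e1: "emeasure (lebesgue_on Omega) (c i) = emeasure lebesgue (c i)"
      by (rule emeasure_restrict_space[OF O cell_sub[OF that]])
    have "c i \<inter> space (lebesgue_on Omega) = c i" using cell_sub[OF that] by auto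
    then have "integrable (lebesgue_on Omega) (indicator (c i) :: _ \<Rightarrow> real)"
      unfolding integrable_indicator_iff using s1 e1 fin[OF that] by simp
    then show ?thesis by simp
  qed
  have "integral\<^sup>L (lebesgue_on Omega) (inj J c w) = (\<Sum>i\<in>J. integral\<^sup>L (lebesgue_on Omega) (\<lambda>x. w i * indicator (c i) x))"
    unfolding inj_def by (rule Bochner_Integration.integral_sum[where f="\<lambda>i x. w i * indicator (c i) x"]) (rule int)
  also have "\<dots> = (\<Sum>i\<in>J. w i * cellmeas c i)"
    using m cell_sub by (intro sum.cong refl) (simp add: Int_absorb2)
  finally show ?thesis .
qed

end

context
  fixes J :: "'i set" and c :: "'i \<Rightarrow> (real^'d::finite) set"
  assumes P: "is_cell_partition J c"
begin

lemma integral_eq_inj: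
  assumes "\<And>x. x \<in> Omega \<Longrightarrow> F x = inj J c w x"
  shows "integral\<^sup>L (lebesgue_on Omega) F = (\<Sum>i\<in>J. w i * cellmeas c i)"
proof -
  have "integral\<^sup>L (lebesgue_on Omega) F = integral\<^sup>L (lebesgue_on Omega) (inj J c w)"
    using assms by (intro Bochner_Integration.integral_cong) auto
  then show ?thesis using integral_inj[OF P] by simp
qed

lemma hsum: "(\<Sum>i\<in>J. cellmeas c i) = 1"
proof -
  have "integral\<^sup>L (lebesgue_on Omega) (\<lambda>x::real^'d. 1::real) = (\<Sum>i\<in>J. 1 * cellmeas c i)"
  proof (rule integral_eq_inj)
    fix x :: "real^'d" assume "x \<in> Omega"
    then obtain i where "i \<in> J" "x \<in> c i" using cover[OF P] by blast
    then show "1 = inj J c (\<lambda>_. 1) x" using inj_cell[OF P] by simp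
  qed
  moreover have "integral\<^sup>L (lebesgue_on Omega) (\<lambda>x::real^'d. 1::real) = 1"
  proof -
    have O: "Omega \<inter> space lebesgue \<in> sets lebesgue" using Omega_sets by simp
    have "measure (lebesgue_on Omega) (Omega :: (real^'d) set) = measure lebesgue (Omega :: (real^'d) set)"
      by (rule measure_restrict_space[OF O]) simp
    then show ?thesis using Omega_meas by simp
  qed
  ultimately show ?thesis by simp
qed

lemma L2norm_inj:
  assumes "\<And>x. x \<in> Omega \<Longrightarrow> F x = inj J c w x"
  shows "L2norm F = sqrt (\<Sum>i\<in>J. cellmeas c i * (w i)^2)"
proof -
  have "integral\<^sup>L (lebesgue_on Omega) (\<lambda>x. (F x)^2) = (\<Sum>i\<in>J. (w i)^2 * cellmeas c i)"
  proof (rule integral_eq_inj)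
    fix x :: "real^'d" assume x: "x \<in> Omega"
    then obtain i where "i \<in> J" "x \<in> c i" using cover[OF P] by blast
    then show "(F x)^2 = inj J c (\<lambda>i. (w i)^2) x" using inj_cell[OF P] assms[OF x] by simp
  qed
  then show ?thesis unfolding L2norm_def by (simp add: mult.commute)
qed

lemma inj2_cell:
  assumes i: "i \<in> J" and x: "x \<in> c i"
  shows "inj2 J c K x y = inj J c (K i) y"
proof -
  have "inj2 J c K x y = inj J c (\<lambda>a. inj J c (K a) y) x"
    unfolding inj2_def inj_def by (intro sum.cong refl) (simp add: sum_distrib_left algebra_simps)
  then show ?thesis using inj_cell[OF P i x] by simp
qed

lemma cplap_eq:
  assumes x: "x \<in> Omega"
  shows "cplap p (inj2 J c K) (inj J c u) x = inj J c (\<lambda>i. dplap p J c K u i) x"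
proof -
  obtain i where i: "i \<in> J" and xi: "x \<in> c i" using cover[OF P x] by blast
  have "integral\<^sup>L (lebesgue_on Omega) (\<lambda>y. inj2 J c K x y * Psi p (inj J c u y - inj J c u x))
      = (\<Sum>j\<in>J. (K i j * Psi p (u j - u i)) * cellmeas c j)"
  proof (rule integral_eq_inj)
    fix y :: "real^'d" assume y: "y \<in> Omega"
    then obtain j where "j \<in> J" "y \<in> c j" using cover[OF P] by blast
    then show "inj2 J c K x y * Psi p (inj J c u y - inj J c u x) = inj J c (\<lambda>j. K i j * Psi p (u j - u i)) y"
      using inj_cell[OF P] inj2_cell[OF i xi] i xi by simp
  qed
  then have "cplap p (inj2 J c K) (inj J c u) x = dplap p J c K u i"
    unfolding cplap_def dplap_def by (simp add: algebra_simps)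
  then show ?thesis using inj_cell[OF P i xi] by simp
qed

lemma rows_le_Linf:
  assumes Knn: "\<And>a b. a \<in> J \<Longrightarrow> b \<in> J \<Longrightarrow> 0 \<le> K a b" and i: "i \<in> J"
  shows "(\<Sum>j\<in>J. cellmeas c j * K i j) \<le> Linf1norm (inj2 J c K)"
proof -
  define g where "g x = integral\<^sup>L (lebesgue_on Omega) (\<lambda>y. \<bar>inj2 J c K x y\<bar>)" for x
  have gv: "g x = (\<Sum>j\<in>J. cellmeas c j * K a j)" if a: "a \<in> J" and xa: "x \<in> c a" for a x
  proof -
    have "g x = (\<Sum>j\<in>J. K a j * cellmeas c j)"
      unfolding g_def
    proof (rule integral_eq_inj)
      fix y :: "real^'d" assume y: "y \<in> Omega"
      then obtain j where "j \<in> J" "y \<in> c j" using cover[OF P] by blast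
      then show "\<bar>inj2 J c K x y\<bar> = inj J c (K a) y"
        using inj_cell[OF P] inj2_cell[OF a xa] Knn[OF a] by simp
    qed
    then show ?thesis by (simp add: mult.commute)
  qed
  define B where "B = (\<Sum>a\<in>J. \<Sum>j\<in>J. cellmeas c j * K a j)"
  have bdd: "bdd_above (g ` Omega)"
  proof (rule bdd_aboveI2)
    fix x :: "real^'d" assume "x \<in> Omega"
    then obtain a where a: "a \<in> J" "x \<in> c a" using cover[OF P] by blast
    have "(\<Sum>j\<in>J. cellmeas c j * K a j) \<le> B"
      unfolding B_def using a finJ[OF P] Knn cellmeas_nn[OF P]
      by (intro member_le_sum) (auto intro!: sum_nonneg)
    then show "g x \<le> B" using gv[OF a] by simp
  qed
  obtain x0 where x0: "x0 \<in> c i" using cell_ne[OF P i] by blast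
  have x0O: "x0 \<in> Omega" using cell_sub[OF P i] x0 by blast
  have "(\<Sum>j\<in>J. cellmeas c j * K i j) = g x0" using gv[OF i x0] by simp
  also have "\<dots> \<le> (SUP x\<in>Omega. g x)" by (rule cSUP_upper[OF x0O bdd])
  finally show ?thesis unfolding Linf1norm_def g_def .
qed

end

lemma pw_sqrt: assumes "N2 > 0" shows "pw (sqrt N2) e = sqrt N2 powr e"
  using assms by (simp add: pw_def)

lemma interp_alg:
  fixes tk tj s a D :: real
  assumes "tk - tj \<noteq> 0"
  shows "(tk - s) / (tk - tj) * a + (s - tj) / (tk - tj) * (a - (tk - tj) * D) - a = - (s - tj) * D"
proof -
  have "(tk - s) / (tk - tj) * a + (s - tj) / (tk - tj) * a = ((tk - s) + (s - tj)) / (tk - tj) * a"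
    by (simp only: distrib_right[symmetric] add_divide_distrib[symmetric])
  also have "\<dots> = a"
  proof -
    have q: "((tk - s) + (s - tj)) / (tk - tj) = 1" using assms by simp
    show ?thesis unfolding q by simp
  qed
  finally have 1: "(tk - s) / (tk - tj) * a + (s - tj) / (tk - tj) * a = a" .
  have 2: "(s - tj) / (tk - tj) * ((tk - tj) * D) = (s - tj) * D" using assms by simp
  have 3: "(s - tj) / (tk - tj) * (a - (tk - tj) * D) = (s - tj) / (tk - tj) * a - (s - tj) * D"
    unfolding right_diff_distrib 2 ..
  have "(tk - s) / (tk - tj) * a + (s - tj) / (tk - tj) * (a - (tk - tj) * D) - a = - ((s - tj) * D)"
    unfolding 3 using 1 by linarith
  then show ?thesis by (simp add: algebra_simps)
qed

theorem lemma6p6: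
  fixes p :: real
    and J :: "nat \<Rightarrow> 'i set"
    and cell :: "nat \<Rightarrow> 'i \<Rightarrow> (real^'d::finite) set"
    and K :: "nat \<Rightarrow> 'i \<Rightarrow> 'i \<Rightarrow> real"
    and f g ustar :: "nat \<Rightarrow> 'i \<Rightarrow> real"
  assumes p_gt: "1 < p" and p_le: "p \<le> 2"
    and partition: "\<And>n. is_cell_partition (J n) (cell n)"
    and K_nonneg: "\<And>n i j. i \<in> J n \<Longrightarrow> j \<in> J n \<Longrightarrow> 0 \<le> K n i j"
    and K_sym: "\<And>n i j. i \<in> J n \<Longrightarrow> j \<in> J n \<Longrightarrow> K n i j = K n j i"
    and ustar: "\<And>n i. i \<in> J n \<Longrightarrow> dplap p (J n) (cell n) (K n) (ustar n) i = f n i"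
    and g_bdd: "bdd_above (range (\<lambda>n. L2norm (\<lambda>x. inj (J n) (cell n) (g n) x - inj (J n) (cell n) (ustar n) x)))"
    and K_bdd: "bdd_above (range (\<lambda>n. Linf1norm (inj2 (J n) (cell n) (K n))))"
  shows "\<exists>C>0. \<forall>n N t u.
           time_partition t N \<and> explicit_scheme p (J n) (cell n) (K n) (f n) (g n) t N u
           \<and> step_ok p (J n) (cell n) (K n) (f n) t N u \<longrightarrow>
           (\<forall>k\<in>{1..N}. \<forall>s\<in>{t (k - 1)..t k}.
              L2norm (\<lambda>x. utilde (J n) (cell n) t u k s x - ubar (J n) (cell n) u k x) \<le> C * tau t N)"
proof -
  obtain M where M: "\<And>n. Linf1norm (inj2 (J n) (cell n) (K n)) \<le> M"
    using K_bdd by (auto simp: bdd_above_def)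
  obtain B where B: "\<And>n. L2norm (\<lambda>x. inj (J n) (cell n) (g n) x - inj (J n) (cell n) (ustar n) x) \<le> B"
    using g_bdd by (auto simp: bdd_above_def)
  define M' where "M' = max M 0"
  define B' where "B' = max B 0"
  define X where "X = 2 * M' * sqrt (1 + 4 * B'^2)"
  define C where "C = X + 1"
  have X0: "X \<ge> 0" unfolding X_def M'_def by simp
  have C0: "C > 0" unfolding C_def using X0 by simp
  show ?thesis
  proof (intro exI[of _ C] conjI allI impI ballI)
    show "C > 0" by (rule C0)
    fix n N t u k s
    assume H: "time_partition t N \<and> explicit_scheme p (J n) (cell n) (K n) (f n) (g n) t N u
           \<and> step_ok p (J n) (cell n) (K n) (f n) t N u"
      and k: "k \<in> {1..N}" and s: "s \<in> {t (k - 1)..t k}"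
    define Jn where "Jn = J n"
    define c where "c = cell n"
    define h where "h = cellmeas c"
    define Kn where "Kn = K n"
    define us where "us = ustar n"
    define L where "L = Linf1norm (inj2 Jn c Kn)"
    have P: "is_cell_partition Jn c" unfolding Jn_def c_def by (rule partition)
    have fin: "finite Jn" by (rule finJ[OF P])
    have hnn: "\<And>j. 0 \<le> h j" unfolding h_def by (rule cellmeas_nn[OF P])
    have hs: "sum h Jn = 1" unfolding h_def by (rule hsum[OF P])
    have Knn: "\<And>i j. i \<in> Jn \<Longrightarrow> j \<in> Jn \<Longrightarrow> 0 \<le> Kn i j" unfolding Jn_def Kn_def by (rule K_nonneg)
    have Ksym: "\<And>i j. i \<in> Jn \<Longrightarrow> j \<in> Jn \<Longrightarrow> Kn i j = Kn j i" unfolding Jn_def Kn_def by (rule K_sym)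
    have rows: "\<And>i. i \<in> Jn \<Longrightarrow> (\<Sum>j\<in>Jn. h j * Kn i j) \<le> L"
      unfolding h_def L_def by (rule rows_le_Linf[OF P Knn])
    have L0: "0 \<le> L"
    proof -
      obtain i0 where "i0 \<in> Jn" using Jne[OF P] by blast
      then have "0 \<le> (\<Sum>j\<in>Jn. h j * Kn i0 j)" using hnn Knn by (auto intro!: sum_nonneg)
      then show ?thesis using rows[OF \<open>i0 \<in> Jn\<close>] by linarith
    qed
    have LM: "L \<le> M'" unfolding L_def Jn_def c_def Kn_def M'_def using M[of n] by simp
    have fdef: "\<And>i. i \<in> Jn \<Longrightarrow> f n i = lap p Jn h Kn us i"
      unfolding h_def Jn_def Kn_def us_def c_def using ustar by (simp add: dplap_lap)
    have TP: "time_partition t N" and ES: "explicit_scheme p Jn c Kn (f n) (g n) t N u"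
      and SO: "step_ok p Jn c Kn (f n) t N u"
      using H unfolding Jn_def c_def Kn_def by auto
    have tpos: "\<And>m. m \<in> {1..N} \<Longrightarrow> t (m - 1) < t m" using TP by (simp add: time_partition_def)
    have upd: "u m i = u (m - 1) i - (t m - t (m - 1)) * (lap p Jn h Kn (u (m - 1)) i - lap p Jn h Kn us i)"
      if m: "m \<in> {1..N}" and i: "i \<in> Jn" for m i
    proof -
      have "(u m i - u (m - 1) i) / (t m - t (m - 1)) = - dplap p Jn c Kn (u (m - 1)) i + f n i"
        using ES m i by (simp add: explicit_scheme_def)
      moreover have "t m - t (m - 1) > 0" using tpos[OF m] by simp
      ultimately show ?thesis using fdef[OF i] by (simp add: dplap_lap h_def field_simps)
    qed
    define E where "E m = (\<Sum>i\<in>Jn. h i * (u m i - us i)^2)" for m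
    define N2 where "N2 m = (\<Sum>i\<in>Jn. h i * (lap p Jn h Kn (u m) i - lap p Jn h Kn us i)^2)" for m
    have N2_0: "N2 m \<ge> 0" for m unfolding N2_def using hnn by (auto intro: sum_nonneg)
    have L2res: "L2norm (\<lambda>x. cplap p (inj2 Jn c Kn) (inj Jn c (u m)) x - inj Jn c (f n) x) = sqrt (N2 m)" for m
    proof -
      have "L2norm (\<lambda>x. cplap p (inj2 Jn c Kn) (inj Jn c (u m)) x - inj Jn c (f n) x)
          = sqrt (\<Sum>i\<in>Jn. cellmeas c i * (dplap p Jn c Kn (u m) i - f n i)^2)"
      proof (rule L2norm_inj[OF P])
        fix x :: "real^'d" assume x: "x \<in> Omega"
        then obtain i where i: "i \<in> Jn" "x \<in> c i" using cover[OF P] by blast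
        show "cplap p (inj2 Jn c Kn) (inj Jn c (u m)) x - inj Jn c (f n) x = inj Jn c (\<lambda>i. dplap p Jn c Kn (u m) i - f n i) x"
          using cplap_eq[OF P x] inj_cell[OF P i] by simp
      qed
      also have "\<dots> = sqrt (N2 m)" unfolding N2_def h_def
        by (intro arg_cong[where f=sqrt] sum.cong refl) (simp add: fdef[unfolded h_def] dplap_lap)
      finally show ?thesis .
    qed
    have Emono: "E (Suc m) \<le> E m" if m: "Suc m \<le> N" for m
    proof -
      define tt where "tt = t (Suc m) - t m"
      have m1: "Suc m \<in> {1..N}" using m by simp
      have tt0: "0 \<le> tt" using tpos[OF m1] by (simp add: tt_def)
      have step: "\<tau> \<le> 2 * Cn p L * sqrt (N2 m) powr ((2-p)/(p-1))"
        if "\<tau> = tt" "L > 0" "N2 m > 0" for \<tau>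
      proof -
        have "t (Suc m) - t (Suc m - 1) \<le> 2 * Cn p L *
          pw (L2norm (\<lambda>x. cplap p (inj2 Jn c Kn) (inj Jn c (u (Suc m - 1))) x - inj Jn c (f n) x)) ((2 - p) / (p - 1))"
          using SO m1 that(2) unfolding step_ok_def L_def by blast
        then show ?thesis using that L2res[of m] pw_sqrt[OF that(3)] by (simp add: tt_def)
      qed
      have "(\<Sum>i\<in>Jn. h i * (u m i - tt * (lap p Jn h Kn (u m) i - lap p Jn h Kn us i) - us i)^2) \<le> E m"
        unfolding E_def
        by (rule core_mono[OF fin _ hs Knn Ksym rows p_gt p_le tt0]) (use hnn step N2_def in auto)
      moreover have "E (Suc m) = (\<Sum>i\<in>Jn. h i * (u m i - tt * (lap p Jn h Kn (u m) i - lap p Jn h Kn us i) - us i)^2)"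
        unfolding E_def tt_def using upd[OF m1] by (intro sum.cong refl) simp
      ultimately show ?thesis by simp
    qed
    have Ebd: "m \<le> N \<Longrightarrow> E m \<le> E 0" for m
    proof (induction m)
      case (Suc m) then show ?case using Emono[of m] by simp
    qed simp
    have E0: "E 0 \<le> B'^2"
    proof -
      have "L2norm (\<lambda>x. inj Jn c (g n) x - inj Jn c us x) = sqrt (\<Sum>i\<in>Jn. cellmeas c i * (g n i - us i)^2)"
      proof (rule L2norm_inj[OF P])
        fix x :: "real^'d" assume x: "x \<in> Omega"
        then obtain i where i: "i \<in> Jn" "x \<in> c i" using cover[OF P] by blast
        show "inj Jn c (g n) x - inj Jn c us x = inj Jn c (\<lambda>i. g n i - us i) x"
          using inj_cell[OF P i] by simp
      qed
      also have "(\<Sum>i\<in>Jn. cellmeas c i * (g n i - us i)^2) = E 0"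
        unfolding E_def h_def using ES by (intro sum.cong refl) (simp add: explicit_scheme_def)
      finally have eq: "L2norm (\<lambda>x. inj Jn c (g n) x - inj Jn c us x) = sqrt (E 0)" .
      have "sqrt (E 0) \<le> B'" using B[of n] eq unfolding Jn_def c_def us_def B'_def by simp
      moreover have "E 0 \<ge> 0" unfolding E_def using hnn by (auto intro: sum_nonneg)
      ultimately show ?thesis by (metis real_sqrt_le_iff real_sqrt_pow2 sqrt_le_D)
    qed
    have km: "k - 1 \<le> N" using k by (metis atLeastAtMost_iff diff_le_self le_trans)
    have Ek: "E (k - 1) \<le> B'^2" using Ebd[OF km] E0 by simp
    have Ek0: "E (k - 1) \<ge> 0" unfolding E_def using hnn by (auto intro: sum_nonneg)
    have "N2 (k - 1) \<le> 4 * L^2 * (1 + 4 * E (k - 1))"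
      unfolding N2_def E_def by (rule core_bound[OF fin _ hs Knn Ksym rows p_gt p_le L0]) (use hnn in auto)
    also have "\<dots> \<le> 4 * M'^2 * (1 + 4 * B'^2)"
    proof -
      have l2: "4 * L^2 \<le> 4 * M'^2" using L0 LM by (simp add: power_mono)
      have e2: "1 + 4 * E (k - 1) \<le> 1 + 4 * B'^2" using Ek by simp
      show ?thesis using mult_mono[OF l2 e2] Ek0 by simp
    qed
    finally have N2b: "N2 (k - 1) \<le> 4 * M'^2 * (1 + 4 * B'^2)" .
    have sN: "sqrt (N2 (k - 1)) \<le> X"
    proof -
      have "sqrt (N2 (k - 1)) \<le> sqrt (4 * M'^2 * (1 + 4 * B'^2))" using N2b by simp
      also have "\<dots> = 2 * M' * sqrt (1 + 4 * B'^2)"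
        unfolding M'_def by (simp add: real_sqrt_mult)
      finally show ?thesis unfolding X_def .
    qed
    define \<sigma> where "\<sigma> = s - t (k - 1)"
    have sig0: "0 \<le> \<sigma>" using s by (simp add: \<sigma>_def)
    have sigt: "\<sigma> \<le> t k - t (k - 1)" using s by (simp add: \<sigma>_def)
    have diff: "L2norm (\<lambda>x. utilde Jn c t u k s x - ubar Jn c u k x) = \<sigma> * sqrt (N2 (k - 1))"
    proof -
      have "L2norm (\<lambda>x. utilde Jn c t u k s x - ubar Jn c u k x)
        = sqrt (\<Sum>i\<in>Jn. cellmeas c i * (- \<sigma> * (lap p Jn h Kn (u (k - 1)) i - lap p Jn h Kn us i))^2)"
      proof (rule L2norm_inj[OF P])
        fix x :: "real^'d" assume x: "x \<in> Omega"
        then obtain i where i: "i \<in> Jn" "x \<in> c i" using cover[OF P] by blast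
        have tk: "t k - t (k - 1) > 0" using tpos[OF k] by simp
        have "utilde Jn c t u k s x - ubar Jn c u k x
           = (t k - s) / (t k - t (k - 1)) * u (k - 1) i + (s - t (k - 1)) / (t k - t (k - 1)) * u k i - u (k - 1) i"
          unfolding utilde_def ubar_def using inj_cell[OF P i] by simp
        also have "\<dots> = - \<sigma> * (lap p Jn h Kn (u (k - 1)) i - lap p Jn h Kn us i)"
          unfolding upd[OF k i(1)] \<sigma>_def using tk by (intro interp_alg) simp
        finally show "utilde Jn c t u k s x - ubar Jn c u k x
           = inj Jn c (\<lambda>i. - \<sigma> * (lap p Jn h Kn (u (k - 1)) i - lap p Jn h Kn us i)) x"
          using inj_cell[OF P i] by simp
      qed
      also have "(\<Sum>i\<in>Jn. cellmeas c i * (- \<sigma> * (lap p Jn h Kn (u (k - 1)) i - lap p Jn h Kn us i))^2)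
          = \<sigma>^2 * N2 (k - 1)"
        unfolding N2_def h_def sum_distrib_left by (intro sum.cong refl) (simp add: power_mult_distrib)
      also have "sqrt (\<sigma>^2 * N2 (k - 1)) = \<sigma> * sqrt (N2 (k - 1))"
        using sig0 by (simp add: real_sqrt_mult)
      finally show ?thesis .
    qed
    have tau_ge: "t k - t (k - 1) \<le> tau t N"
    proof -
      have "t k - t (k - 1) \<in> {t k - t (k - 1) | k. k \<in> {1..N}}" using k by blast
      moreover have "finite {t k - t (k - 1) | k. k \<in> {1..N}}" by simp
      ultimately show ?thesis unfolding tau_def by (rule Max_ge[rotated])
    qed
    have "\<sigma> * sqrt (N2 (k - 1)) \<le> \<sigma> * C"
      using sN sig0 unfolding C_def by (intro mult_left_mono) auto
    also have "\<dots> \<le> (t k - t (k - 1)) * C" using sigt C0 by (intro mult_right_mono) auto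
    also have "\<dots> \<le> tau t N * C" using tau_ge C0 by (intro mult_right_mono) auto
    finally show "L2norm (\<lambda>x. utilde (J n) (cell n) t u k s x - ubar (J n) (cell n) u k x) \<le> C * tau t N"
      using diff unfolding Jn_def c_def by (simp add: mult.commute)
  qed
qed


end
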